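(* Let $p\in(0,1)$, $\gamma>0$, $B>0$, $w\in\mathbb{N}$. Then: (a) for each $N\in\mathbb{N}$, $\mathcal{T}_N$ has a unique maximizer over the set $\{(\xi_1,\dots,\xi_N):\xi_j\ge0,\ \sum_{j=1}^N\xi_j\le B\}$; (b) $\mathcal{T}_N^*$ is a (non-strictly) increasing function of $N$; (c) $\lim_{N\to\infty}\mathcal{T}_N^*=\mathcal{T}_\infty^*$, and this limit is finite.
   Context: Logarithms are base 2. A nonnegative sequence $(x_j)_{j\ge1}$ is admissible if $\sum_j x_j\le B$. For an admissible sequence, $$\mathcal{T}_\infty(x_1,x_2,\dots)=\sum_{k=1}^{w}p^2(1-p)^{k-1}\frac{k}{2}\log_2\!\Big(1+\gamma\frac{B}{k}\Big)+\sum_{j=1}^{\infty}p(1-p)^{j+w-1}\frac12\log_2(1+\gamma x_j)+\sum_{k=1}^{\infty}p^2(1-p)^{k+w-1}\frac{w}{2}\log_2\!\Big(1+\gamma\frac{B-\sum_{j=1}^{k}x_j}{w}\Big),$$ and $\mathcal{T}_\infty^*$ is the supremum of $\mathcal{T}_\infty$ over all admissible sequences. For $N\in\mathbb{N}$ and $\xi_1,\dots,\xi_N\ge0$ with $\sum_{j=1}^N\xi_j\le B$, define $\mathcal{T}_N(\xi_1,\dots,\xi_N)=\mathcal{T}_\infty(\xi_1,\dots,\xi_N,0,0,\dots)$, and let $\mathcal{T}_N^*$ be the supremum of $\mathcal{T}_N$ over this set. *)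

theory Defs
  imports "HOL-Analysis.Analysis"
begin

text \<open>Sequences (x_1, x_2, ...) are represented as functions nat => real,
  shifted by one: x j here stands for x_{j+1} in the paper.\<close>

definition admissible :: "real \<Rightarrow> (nat \<Rightarrow> real) \<Rightarrow> bool" where
  "admissible B x \<longleftrightarrow> (\<forall>j. 0 \<le> x j) \<and> summable x \<and> suminf x \<le> B"

definition T_inf :: "real \<Rightarrow> real \<Rightarrow> real \<Rightarrow> nat \<Rightarrow> (nat \<Rightarrow> real) \<Rightarrow> real" where
  "T_inf p \<gamma> B w x =
     (\<Sum>k=1..w. p^2 * (1-p)^(k-1) * (real k / 2) * log 2 (1 + \<gamma> * B / real k))
   + (\<Sum>j. p * (1-p)^(j + w) * (1/2) * log 2 (1 + \<gamma> * x j))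
   + (\<Sum>k. p^2 * (1-p)^(k + w) * (real w / 2)
             * log 2 (1 + \<gamma> * (B - (\<Sum>j\<le>k. x j)) / real w))"

definition T_inf_star :: "real \<Rightarrow> real \<Rightarrow> real \<Rightarrow> nat \<Rightarrow> real" where
  "T_inf_star p \<gamma> B w = Sup (T_inf p \<gamma> B w ` {x. admissible B x})"

text \<open>Feasible set for T_N: (xi_1..xi_N) embedded as a sequence vanishing from index N on.\<close>
definition feasible_N :: "real \<Rightarrow> nat \<Rightarrow> (nat \<Rightarrow> real) set" where
  "feasible_N B N = {\<xi>. (\<forall>j. 0 \<le> \<xi> j) \<and> (\<forall>j\<ge>N. \<xi> j = 0) \<and> (\<Sum>j<N. \<xi> j) \<le> B}"

definition T_N :: "real \<Rightarrow> real \<Rightarrow> real \<Rightarrow> nat \<Rightarrow> nat \<Rightarrow> (nat \<Rightarrow> real) \<Rightarrow> real" where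
  "T_N p \<gamma> B w N \<xi> = T_inf p \<gamma> B w (\<lambda>j. if j < N then \<xi> j else 0)"

definition T_N_star :: "real \<Rightarrow> real \<Rightarrow> real \<Rightarrow> nat \<Rightarrow> nat \<Rightarrow> real" where
  "T_N_star p \<gamma> B w N = Sup (T_N p \<gamma> B w N ` feasible_N B N)"

end

theory Submission imports Defs begin

lemma half_le: "(a::real) \<le> 2*b \<Longrightarrow> a/2 \<le> b" by simp
lemma half_less: "(a::real) < 2*b \<Longrightarrow> a/2 < b" by simp

lemma log2_concave:
  fixes A C :: real assumes "0<A" "0<C"
  shows "(log 2 A + log 2 C)/2 \<le> log 2 ((A+C)/2)"
    and "A \<noteq> C \<Longrightarrow> (log 2 A + log 2 C)/2 < log 2 ((A+C)/2)"
proof -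
  have e: "log 2 A + log 2 C = log 2 (A*C)" using assms by (simp add: log_mult)
  have e2: "2 * log 2 ((A+C)/2) = log 2 (((A+C)/2)^2)" using assms by (simp add: log_nat_power)
  have d: "((A+C)/2)^2 - A*C = ((A-C)/2)^2" by (simp add: power2_eq_square field_simps)
  have pos: "0 < A*C" "0 < ((A+C)/2)^2" using assms by auto
  have "A*C \<le> ((A+C)/2)^2" using d zero_le_power2[of "(A-C)/2"] by linarith
  then have "log 2 (A*C) \<le> log 2 (((A+C)/2)^2)" using pos by simp
  then have "log 2 A + log 2 C \<le> 2 * log 2 ((A+C)/2)" unfolding e e2 .
  then show "(log 2 A + log 2 C)/2 \<le> log 2 ((A+C)/2)" by (rule half_le)
  assume "A \<noteq> C"
  then have "0 < ((A-C)/2)^2" by simp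
  then have "A*C < ((A+C)/2)^2" using d by linarith
  then have "log 2 (A*C) < log 2 (((A+C)/2)^2)" using pos by simp
  then have "log 2 A + log 2 C < 2 * log 2 ((A+C)/2)" unfolding e e2 .
  then show "(log 2 A + log 2 C)/2 < log 2 ((A+C)/2)" by (rule half_less)
qed

lemma log_mono2: fixes x y \<gamma> :: real assumes "0 \<le> x" "x \<le> y" "0 \<le> \<gamma>"
  shows "log 2 (1 + \<gamma> * x) \<le> log 2 (1 + \<gamma> * y)" "0 \<le> log 2 (1 + \<gamma> * x)"
proof -
  have "1 + \<gamma> * x \<le> 1 + \<gamma> * y" using assms by (simp add: mult_left_mono)
  moreover have "1 \<le> 1 + \<gamma> * x" using assms by simp
  ultimately show "log 2 (1 + \<gamma> * x) \<le> log 2 (1 + \<gamma> * y)" "0 \<le> log 2 (1 + \<gamma> * x)" by simp_all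
qed

lemma coord_cont [continuous_intros]: "continuous_on S (\<lambda>x::nat\<Rightarrow>real. x i)"
  by (rule continuous_on_subset[OF continuous_on_product_coordinates]) auto

locale Sett =
  fixes p \<gamma> B :: real and w :: nat
  assumes p0: "0<p" and p1: "p<1" and g0: "0<\<gamma>" and B0: "0<B" and w1: "1 \<le> w"
begin

definition f2 :: "(nat \<Rightarrow> real) \<Rightarrow> nat \<Rightarrow> real" where
  "f2 x j = p * (1-p)^(j + w) * (1/2) * log 2 (1 + \<gamma> * x j)"
definition f3 :: "(nat \<Rightarrow> real) \<Rightarrow> nat \<Rightarrow> real" where
  "f3 x k = p^2 * (1-p)^(k + w) * (real w / 2) * log 2 (1 + \<gamma> * (B - (\<Sum>j\<le>k. x j)) / real w)"
definition C0 :: real where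
  "C0 = (\<Sum>k=1..w. p^2 * (1-p)^(k-1) * (real k / 2) * log 2 (1 + \<gamma> * B / real k))"
definition g2 :: "nat \<Rightarrow> real" where
  "g2 j = p * (1-p)^(j + w) * (1/2) * log 2 (1 + \<gamma> * B)"
definition g3 :: "nat \<Rightarrow> real" where
  "g3 k = p^2 * (1-p)^(k + w) * (real w / 2) * log 2 (1 + \<gamma> * B / real w)"
definition ok :: "(nat \<Rightarrow> real) \<Rightarrow> bool" where
  "ok x \<longleftrightarrow> (\<forall>j. 0 \<le> x j) \<and> (\<forall>k. (\<Sum>j\<le>k. x j) \<le> B)"

abbreviation T where "T x \<equiv> T_inf p \<gamma> B w x"

lemma T_eq: "T x = C0 + suminf (f2 x) + suminf (f3 x)"
  unfolding T_inf_def C0_def f2_def[abs_def] f3_def[abs_def] ..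

lemma ok_le: assumes "ok x" shows "0 \<le> x j" "x j \<le> B"
proof -
  show "0 \<le> x j" using assms ok_def by auto
  have "x j \<le> (\<Sum>i\<le>j. x i)" using assms unfolding ok_def
    by (intro member_le_sum) auto
  moreover have "(\<Sum>i\<le>j. x i) \<le> B" using assms unfolding ok_def by blast
  ultimately show "x j \<le> B" by linarith
qed

lemma ok_rem: assumes "ok x" shows "0 \<le> B - (\<Sum>j\<le>k. x j)"
  using assms ok_def by auto

lemma adm_ok: assumes "admissible B x" shows "ok x"
proof -
  have "(\<Sum>j\<le>k. x j) \<le> suminf x" for k
    using assms unfolding admissible_def by (intro sum_le_suminf) auto
  moreover have "suminf x \<le> B" using assms unfolding admissible_def by auto
  ultimately have "(\<Sum>j\<le>k. x j) \<le> B" for k using order_trans by blast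
  then show ?thesis using assms unfolding admissible_def ok_def by auto
qed

lemma a_nonneg: "0 \<le> p * (1-p)^(j + w) * (1/2)" using p0 p1 by auto
lemma b_nonneg: "0 \<le> p^2 * (1-p)^(k + w) * (real w / 2)" using p0 p1 by auto
lemma a_pos: "0 < p * (1-p)^(j + w) * (1/2)" using p0 p1 by auto

lemma f2_bounds: assumes "ok x" shows "0 \<le> f2 x j" "f2 x j \<le> g2 j"
proof -
  have l: "0 \<le> log 2 (1 + \<gamma> * x j)" "log 2 (1 + \<gamma> * x j) \<le> log 2 (1 + \<gamma> * B)"
    using log_mono2[of "x j" B \<gamma>] ok_le[OF assms, of j] g0 by auto
  show "0 \<le> f2 x j" unfolding f2_def using a_nonneg l by simp
  from l(2)
  show "f2 x j \<le> g2 j" unfolding f2_def g2_def by (rule mult_left_mono[OF _ a_nonneg])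
qed

lemma f3_bounds: assumes "ok x" shows "0 \<le> f3 x k" "f3 x k \<le> g3 k"
proof -
  have r: "0 \<le> B - (\<Sum>j\<le>k. x j)" "B - (\<Sum>j\<le>k. x j) \<le> B"
    using ok_rem[OF assms] assms unfolding ok_def by (auto intro: sum_nonneg)
  have w0: "0 < real w" using w1 by simp
  have u: "0 \<le> \<gamma> * (B - (\<Sum>j\<le>k. x j)) / real w" using r g0 w0 by simp
  have v: "\<gamma> * (B - (\<Sum>j\<le>k. x j)) / real w \<le> \<gamma> * B / real w" using r g0 w0
    by (intro divide_right_mono mult_left_mono) auto
  have "0 \<le> log 2 (1 + \<gamma> * (B - (\<Sum>j\<le>k. x j)) / real w)"
    using log_mono2(2)[OF u order_refl, of 1] by simp
  then show "0 \<le> f3 x k" unfolding f3_def using b_nonneg by simp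
  have "log 2 (1 + \<gamma> * (B - (\<Sum>j\<le>k. x j)) / real w) \<le> log 2 (1 + \<gamma> * B / real w)"
    using log_mono2(1)[OF u v, of 1] by simp
  then show "f3 x k \<le> g3 k" unfolding f3_def g3_def by (rule mult_left_mono[OF _ b_nonneg])
qed

lemma geo_summable: "summable (\<lambda>j. c * (1-p)^(j + w))"
proof -
  have "summable (\<lambda>j. (c * (1-p)^w) * (1-p)^j)"
    using p0 p1 by (intro summable_mult summable_geometric) auto
  then show ?thesis by (simp add: power_add mult_ac)
qed

lemma g2_summable: "summable g2"
  using geo_summable[of "p * (1/2) * log 2 (1 + \<gamma> * B)"] unfolding g2_def by (simp add: mult_ac)
lemma g3_summable: "summable g3"
  using geo_summable[of "p^2 * (real w / 2) * log 2 (1 + \<gamma> * B / real w)"] unfolding g3_def by (simp add: mult_ac)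

lemma f2_summable: "ok x \<Longrightarrow> summable (f2 x)"
  by (rule summable_comparison_test'[OF g2_summable, of 0]) (use f2_bounds in auto)
lemma f3_summable: "ok x \<Longrightarrow> summable (f3 x)"
  by (rule summable_comparison_test'[OF g3_summable, of 0]) (use f3_bounds in auto)

lemma T_bound: assumes "ok x" shows "T x \<le> C0 + suminf g2 + suminf g3"
proof -
  have "suminf (f2 x) \<le> suminf g2"
    by (rule suminf_le[OF f2_bounds(2)[OF assms] f2_summable[OF assms] g2_summable])
  moreover have "suminf (f3 x) \<le> suminf g3"
    by (rule suminf_le[OF f3_bounds(2)[OF assms] f3_summable[OF assms] g3_summable])
  ultimately show ?thesis unfolding T_eq by linarith
qed


lemma ok_mid: assumes "ok x" "ok y" shows "ok (\<lambda>j. (x j + y j)/2)"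
  unfolding ok_def
proof (intro conjI allI)
  fix k
  have e: "(\<Sum>j\<le>k. (x j + y j)/2) = ((\<Sum>j\<le>k. x j) + (\<Sum>j\<le>k. y j))/2"
    by (simp add: sum.distrib sum_divide_distrib[symmetric])
  have "(\<Sum>j\<le>k. x j) \<le> B" "(\<Sum>j\<le>k. y j) \<le> B" using assms unfolding ok_def by auto
  then show "(\<Sum>j\<le>k. (x j + y j)/2) \<le> B" unfolding e by argo
next
  fix j
  have "0 \<le> x j" "0 \<le> y j" using assms unfolding ok_def by auto
  then show "0 \<le> (x j + y j)/2" by simp
qed

lemma f2_mid: assumes "ok x" "ok y"
  shows "(f2 x j + f2 y j)/2 \<le> f2 (\<lambda>j. (x j + y j)/2) j"
    and "x j \<noteq> y j \<Longrightarrow> (f2 x j + f2 y j)/2 < f2 (\<lambda>j. (x j + y j)/2) j"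
proof -
  define a where "a = p * (1-p)^(j + w) * (1/2)"
  have a0: "0 < a" unfolding a_def using a_pos .
  have px: "0 < 1 + \<gamma> * x j" "0 < 1 + \<gamma> * y j" using ok_le[OF assms(1), of j] ok_le[OF assms(2), of j] g0
    by (simp_all add: add_pos_nonneg)
  have e: "1 + \<gamma> * ((x j + y j)/2) = ((1 + \<gamma> * x j) + (1 + \<gamma> * y j))/2" by (simp add: field_simps)
  have l: "(f2 x j + f2 y j)/2 = a * ((log 2 (1 + \<gamma> * x j) + log 2 (1 + \<gamma> * y j))/2)"
    unfolding f2_def a_def by (simp add: field_simps)
  have r: "f2 (\<lambda>j. (x j + y j)/2) j = a * log 2 (((1 + \<gamma> * x j) + (1 + \<gamma> * y j))/2)"
    unfolding f2_def a_def e by simp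
  show "(f2 x j + f2 y j)/2 \<le> f2 (\<lambda>j. (x j + y j)/2) j"
    unfolding l r using log2_concave(1)[OF px] a0 by (intro mult_left_mono) auto
  assume "x j \<noteq> y j"
  then have "1 + \<gamma> * x j \<noteq> 1 + \<gamma> * y j" using g0 by simp
  then show "(f2 x j + f2 y j)/2 < f2 (\<lambda>j. (x j + y j)/2) j"
    unfolding l r using log2_concave(2)[OF px] a0 by (intro mult_strict_left_mono) auto
qed

lemma f3_mid: assumes "ok x" "ok y"
  shows "(f3 x k + f3 y k)/2 \<le> f3 (\<lambda>j. (x j + y j)/2) k"
proof -
  define b where "b = p^2 * (1-p)^(k + w) * (real w / 2)"
  have b0: "0 \<le> b" unfolding b_def using b_nonneg .
  have w0: "0 < real w" using w1 by simp
  define X where "X = (\<Sum>j\<le>k. x j)"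
  define Y where "Y = (\<Sum>j\<le>k. y j)"
  have X: "0 \<le> B - X" "0 \<le> B - Y" using ok_rem[OF assms(1)] ok_rem[OF assms(2)] X_def Y_def by auto
  have px: "0 < 1 + \<gamma> * (B - X) / real w" "0 < 1 + \<gamma> * (B - Y) / real w" using X g0 w0
    by (simp_all add: add_pos_nonneg)
  have sm: "(\<Sum>j\<le>k. (x j + y j)/2) = (X + Y)/2"
    unfolding X_def Y_def by (simp add: sum.distrib sum_divide_distrib[symmetric])
  have e: "1 + \<gamma> * (B - (X + Y)/2) / real w = ((1 + \<gamma> * (B - X) / real w) + (1 + \<gamma> * (B - Y) / real w))/2"
    using w0 by (simp add: field_simps)
  have l: "(f3 x k + f3 y k)/2 = b * ((log 2 (1 + \<gamma> * (B - X) / real w) + log 2 (1 + \<gamma> * (B - Y) / real w))/2)"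
    unfolding f3_def b_def X_def Y_def by (simp add: field_simps)
  have r: "f3 (\<lambda>j. (x j + y j)/2) k = b * log 2 (((1 + \<gamma> * (B - X) / real w) + (1 + \<gamma> * (B - Y) / real w))/2)"
    unfolding f3_def b_def sm e by simp
  show ?thesis
    unfolding l r using log2_concave(1)[OF px] b0 by (intro mult_left_mono) auto
qed

lemma T_concave: assumes "ok x" "ok y"
  shows "(T x + T y)/2 \<le> T (\<lambda>j. (x j + y j)/2)"
    and "x j0 \<noteq> y j0 \<Longrightarrow> (T x + T y)/2 < T (\<lambda>j. (x j + y j)/2)"
proof -
  define m where "m = (\<lambda>j. (x j + y j)/2)"
  have om: "ok m" unfolding m_def using ok_mid[OF assms] .
  have s2: "summable (\<lambda>j. (f2 x j + f2 y j)/2)" using f2_summable[OF assms(1)] f2_summable[OF assms(2)]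
    by (intro summable_divide summable_add)
  have s3: "summable (\<lambda>j. (f3 x j + f3 y j)/2)" using f3_summable[OF assms(1)] f3_summable[OF assms(2)]
    by (intro summable_divide summable_add)
  have e2: "(suminf (f2 x) + suminf (f2 y))/2 = (\<Sum>j. (f2 x j + f2 y j)/2)"
    using f2_summable[OF assms(1)] f2_summable[OF assms(2)] by (simp add: suminf_add suminf_divide summable_add)
  have e3: "(suminf (f3 x) + suminf (f3 y))/2 = (\<Sum>j. (f3 x j + f3 y j)/2)"
    using f3_summable[OF assms(1)] f3_summable[OF assms(2)] by (simp add: suminf_add suminf_divide summable_add)
  have eT: "(T x + T y)/2 = C0 + (\<Sum>j. (f2 x j + f2 y j)/2) + (\<Sum>j. (f3 x j + f3 y j)/2)"
    unfolding T_eq e2[symmetric] e3[symmetric] by (simp add: field_simps)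
  have i2: "(\<Sum>j. (f2 x j + f2 y j)/2) \<le> suminf (f2 m)"
    using suminf_le[OF _ s2 f2_summable[OF om]] f2_mid(1)[OF assms] unfolding m_def by blast
  have i3: "(\<Sum>j. (f3 x j + f3 y j)/2) \<le> suminf (f3 m)"
    using suminf_le[OF _ s3 f3_summable[OF om]] f3_mid[OF assms] unfolding m_def by blast
  show "(T x + T y)/2 \<le> T (\<lambda>j. (x j + y j)/2)"
    using i2 i3 unfolding eT T_eq[of "\<lambda>j. (x j + y j)/2"] m_def by argo
  assume ne: "x j0 \<noteq> y j0"
  have "0 < (\<Sum>j. f2 m j - (f2 x j + f2 y j)/2)"
  proof (rule suminf_pos2[where i=j0])
    show "summable (\<lambda>j. f2 m j - (f2 x j + f2 y j)/2)" using f2_summable[OF om] s2 by (rule summable_diff)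
    show "0 \<le> f2 m j - (f2 x j + f2 y j)/2" for j using f2_mid(1)[OF assms, of j] unfolding m_def by simp
    show "0 < f2 m j0 - (f2 x j0 + f2 y j0)/2" using f2_mid(2)[OF assms ne] unfolding m_def by simp
  qed
  then have "(\<Sum>j. (f2 x j + f2 y j)/2) < suminf (f2 m)"
    using suminf_diff[OF f2_summable[OF om] s2] by linarith
  then show "(T x + T y)/2 < T (\<lambda>j. (x j + y j)/2)"
    using i3 unfolding eT T_eq[of "\<lambda>j. (x j + y j)/2"] m_def by argo
qed


lemma sum_stable: assumes "\<forall>j\<ge>N. \<xi> j = 0" "N \<le> Suc n"
  shows "(\<Sum>j\<le>n. \<xi> j) = (\<Sum>j<N. \<xi> j)"
  by (rule sum.mono_neutral_right) (use assms in auto)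

lemma feas_adm: assumes "\<xi> \<in> feasible_N B N" shows "admissible B \<xi>"
proof -
  have z: "\<And>n. n \<notin> {..<N} \<Longrightarrow> \<xi> n = 0" using assms unfolding feasible_N_def by auto
  have "summable \<xi>" using summable_finite[of "{..<N}" \<xi>] z by blast
  moreover have "suminf \<xi> = (\<Sum>j<N. \<xi> j)" using suminf_finite[of "{..<N}" \<xi>] z by blast
  ultimately show ?thesis using assms unfolding feasible_N_def admissible_def by auto
qed

lemma feas_ok: "\<xi> \<in> feasible_N B N \<Longrightarrow> ok \<xi>"
  using feas_adm adm_ok by blast

lemma TN_eq: assumes "\<xi> \<in> feasible_N B N" shows "T_N p \<gamma> B w N \<xi> = T \<xi>"
proof -
  have "(\<lambda>j. if j < N then \<xi> j else 0) = \<xi>" using assms unfolding feasible_N_def by auto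
  then show ?thesis unfolding T_N_def by simp
qed

lemma feas_mid: assumes "x \<in> feasible_N B N" "y \<in> feasible_N B N"
  shows "(\<lambda>j. (x j + y j)/2) \<in> feasible_N B N"
proof -
  have e: "(\<Sum>j<N. (x j + y j)/2) = ((\<Sum>j<N. x j) + (\<Sum>j<N. y j))/2"
    by (simp add: sum.distrib sum_divide_distrib[symmetric])
  have "(\<Sum>j<N. x j) \<le> B" "(\<Sum>j<N. y j) \<le> B" using assms unfolding feasible_N_def by auto
  then have "(\<Sum>j<N. (x j + y j)/2) \<le> B" unfolding e by argo
  then show ?thesis using assms unfolding feasible_N_def by auto
qed

lemma zero_feas: "(\<lambda>_. 0) \<in> feasible_N B N"
  unfolding feasible_N_def using B0 by auto

lemma trunc_feas: assumes "admissible B x" shows "(\<lambda>j. if j < N then x j else 0) \<in> feasible_N B N"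
proof -
  have nn: "\<forall>j. 0 \<le> x j" and sm: "summable x" using assms unfolding admissible_def by auto
  have "(\<Sum>j<N. x j) \<le> suminf x" using sum_le_suminf[OF sm, of "{..<N}"] nn by auto
  then have "(\<Sum>j<N. x j) \<le> B" using assms unfolding admissible_def by auto
  then show ?thesis using assms unfolding feasible_N_def admissible_def by auto
qed

definition bb :: "nat \<Rightarrow> real" where "bb k = p^2 * (1-p)^(k + w) * (real w / 2)"
definition cN :: "nat \<Rightarrow> real" where "cN N = suminf (\<lambda>k. bb (k + N))"
definition F :: "nat \<Rightarrow> (nat \<Rightarrow> real) \<Rightarrow> real" where
  "F N \<xi> = C0 + (\<Sum>j<N. f2 \<xi> j) + (\<Sum>k<N. f3 \<xi> k)
     + cN N * log 2 (1 + \<gamma> * (B - (\<Sum>j<N. \<xi> j)) / real w)"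

lemma bb_summable: "summable bb"
  using geo_summable[of "p^2 * (real w / 2)"] unfolding bb_def by (simp add: mult_ac)

lemma F_eq: assumes "\<xi> \<in> feasible_N B N" shows "T \<xi> = F N \<xi>"
proof -
  have ok: "ok \<xi>" using feas_ok[OF assms] .
  have z: "\<forall>j\<ge>N. \<xi> j = 0" using assms unfolding feasible_N_def by auto
  have s2: "suminf (f2 \<xi>) = (\<Sum>j<N. f2 \<xi> j)"
    by (rule suminf_finite) (use z in \<open>auto simp: f2_def\<close>)
  define L where "L = log 2 (1 + \<gamma> * (B - (\<Sum>j<N. \<xi> j)) / real w)"
  have sh: "f3 \<xi> (k + N) = bb (k + N) * L" for k
    unfolding f3_def bb_def L_def using sum_stable[OF z, of "k+N"] by simp
  have "suminf (f3 \<xi>) = (\<Sum>k. f3 \<xi> (k + N)) + (\<Sum>k<N. f3 \<xi> k)"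
    by (rule suminf_split_initial_segment[OF f3_summable[OF ok]])
  also have "(\<Sum>k. f3 \<xi> (k + N)) = cN N * L"
    unfolding sh cN_def by (rule suminf_mult2[OF summable_ignore_initial_segment[OF bb_summable], symmetric])
  finally show ?thesis unfolding T_eq F_def s2 L_def by simp
qed

lemma feas_compact: "compact (feasible_N B N)"
proof -
  define S where "S = (\<lambda>j::nat. if j < N then {0..B} else {0::real})"
  have ci: "compactin euclidean (S i)" for i unfolding S_def by simp
  have "compactin (product_topology (\<lambda>i. euclidean) UNIV) (PiE UNIV S)"
    using compactin_PiE[of "\<lambda>i. euclidean" UNIV S] ci by blast
  then have c: "compact (PiE UNIV S)" unfolding euclidean_product_topology by simp
  have cs: "continuous_on UNIV (\<lambda>\<xi>::nat\<Rightarrow>real. (\<Sum>j<N. \<xi> j))"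
    by (intro continuous_on_sum coord_cont)
  have cl: "closed {\<xi>::nat\<Rightarrow>real. (\<Sum>j<N. \<xi> j) \<le> B}"
    by (rule closed_Collect_le[OF cs continuous_on_const])
  have "feasible_N B N = PiE UNIV S \<inter> {\<xi>. (\<Sum>j<N. \<xi> j) \<le> B}"
  proof (intro equalityI subsetI)
    fix \<xi> assume a: "\<xi> \<in> feasible_N B N"
    have "\<xi> j \<in> S j" for j
    proof (cases "j < N")
      case True
      then show ?thesis using ok_le[OF feas_ok[OF a], of j] unfolding S_def by simp
    next
      case False
      then show ?thesis using a unfolding S_def feasible_N_def by simp
    qed
    then have "\<xi> \<in> PiE UNIV S" by (simp add: PiE_iff)
    then show "\<xi> \<in> PiE UNIV S \<inter> {\<xi>. (\<Sum>j<N. \<xi> j) \<le> B}" using a unfolding feasible_N_def by simp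
  next
    fix \<xi> assume a: "\<xi> \<in> PiE UNIV S \<inter> {\<xi>. (\<Sum>j<N. \<xi> j) \<le> B}"
    then have m: "\<xi> j \<in> S j" for j by (simp add: PiE_iff)
    have "0 \<le> \<xi> j" for j using m[of j] unfolding S_def by (cases "j < N") simp_all
    moreover have "\<xi> j = 0" if "N \<le> j" for j using m[of j] that unfolding S_def by simp
    ultimately show "\<xi> \<in> feasible_N B N" using a unfolding feasible_N_def by simp
  qed
  then show ?thesis using compact_Int_closed[OF c cl] by simp
qed

lemma F_cont: "continuous_on (feasible_N B N) (F N)"
proof -
  have w0: "0 < real w" using w1 by simp
  have p1: "\<forall>\<xi>\<in>feasible_N B N. 1 + \<gamma> * \<xi> j \<noteq> 0" for j
  proof
    fix \<xi> assume "\<xi> \<in> feasible_N B N"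
    then have "0 \<le> \<xi> j" using ok_le feas_ok by blast
    then show "1 + \<gamma> * \<xi> j \<noteq> 0" using g0 by (smt (verit) mult_nonneg_nonneg)
  qed
  have p2: "\<forall>\<xi>\<in>feasible_N B N. 1 + \<gamma> * (B - (\<Sum>j\<le>k. \<xi> j)) / real w \<noteq> 0" for k
  proof
    fix \<xi> assume "\<xi> \<in> feasible_N B N"
    then have "0 \<le> B - (\<Sum>j\<le>k. \<xi> j)" using ok_rem feas_ok by blast
    then have "0 \<le> \<gamma> * (B - (\<Sum>j\<le>k. \<xi> j)) / real w" using g0 w0 by simp
    then show "1 + \<gamma> * (B - (\<Sum>j\<le>k. \<xi> j)) / real w \<noteq> 0" by argo
  qed
  have p3: "\<forall>\<xi>\<in>feasible_N B N. 1 + \<gamma> * (B - (\<Sum>j<N. \<xi> j)) / real w \<noteq> 0"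
  proof
    fix \<xi> assume "\<xi> \<in> feasible_N B N"
    then have "0 \<le> B - (\<Sum>j<N. \<xi> j)" unfolding feasible_N_def by auto
    then have "0 \<le> \<gamma> * (B - (\<Sum>j<N. \<xi> j)) / real w" using g0 w0 by simp
    then show "1 + \<gamma> * (B - (\<Sum>j<N. \<xi> j)) / real w \<noteq> 0" by argo
  qed
  define Fs where "Fs = feasible_N B N"
  have L1: "continuous_on Fs (\<lambda>\<xi>. f2 \<xi> j)" for j
  proof -
    have g: "continuous_on Fs (\<lambda>\<xi>. 1 + \<gamma> * \<xi> j)"
      by (rule continuous_on_add[OF continuous_on_const continuous_on_mult_left[OF coord_cont]])
    have "continuous_on Fs (\<lambda>\<xi>. log 2 (1 + \<gamma> * \<xi> j))"
      by (rule continuous_on_log[OF continuous_on_const g]) (use p1 in \<open>simp_all add: Fs_def\<close>)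
    then show ?thesis unfolding f2_def by (rule continuous_on_mult_left)
  qed
  have L2: "continuous_on Fs (\<lambda>\<xi>. f3 \<xi> k)" for k
  proof -
    have s: "continuous_on Fs (\<lambda>\<xi>. (\<Sum>j\<le>k. \<xi> j))"
      by (rule continuous_on_sum) (rule coord_cont)
    have g: "continuous_on Fs (\<lambda>\<xi>. 1 + \<gamma> * (B - (\<Sum>j\<le>k. \<xi> j)) / real w)"
      by (intro continuous_on_add continuous_on_const continuous_on_divide continuous_on_mult_left
          continuous_on_diff s) (use w0 in simp)
    have "continuous_on Fs (\<lambda>\<xi>. log 2 (1 + \<gamma> * (B - (\<Sum>j\<le>k. \<xi> j)) / real w))"
      by (rule continuous_on_log[OF continuous_on_const g]) (use p2 in \<open>simp_all add: Fs_def\<close>)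
    then show ?thesis unfolding f3_def by (rule continuous_on_mult_left)
  qed
  have L3: "continuous_on Fs (\<lambda>\<xi>. cN N * log 2 (1 + \<gamma> * (B - (\<Sum>j<N. \<xi> j)) / real w))"
  proof -
    have s: "continuous_on Fs (\<lambda>\<xi>. (\<Sum>j<N. \<xi> j))"
      by (rule continuous_on_sum) (rule coord_cont)
    have g: "continuous_on Fs (\<lambda>\<xi>. 1 + \<gamma> * (B - (\<Sum>j<N. \<xi> j)) / real w)"
      by (intro continuous_on_add continuous_on_const continuous_on_divide continuous_on_mult_left
          continuous_on_diff s) (use w0 in simp)
    have "continuous_on Fs (\<lambda>\<xi>. log 2 (1 + \<gamma> * (B - (\<Sum>j<N. \<xi> j)) / real w))"
      by (rule continuous_on_log[OF continuous_on_const g]) (use p3 in \<open>simp_all add: Fs_def\<close>)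
    then show ?thesis by (rule continuous_on_mult_left)
  qed
  have "continuous_on Fs (\<lambda>\<xi>. C0 + (\<Sum>j<N. f2 \<xi> j) + (\<Sum>k<N. f3 \<xi> k)
     + cN N * log 2 (1 + \<gamma> * (B - (\<Sum>j<N. \<xi> j)) / real w))"
    by (intro continuous_on_add continuous_on_const continuous_on_sum L1 L2 L3)
  then show ?thesis unfolding F_def[abs_def] Fs_def .
qed

lemma exists_max: "\<exists>\<xi>\<in>feasible_N B N. \<forall>\<eta>\<in>feasible_N B N. T \<eta> \<le> T \<xi>"
proof -
  obtain \<xi> where "\<xi>\<in>feasible_N B N" "\<forall>\<eta>\<in>feasible_N B N. F N \<eta> \<le> F N \<xi>"
    using continuous_attains_sup[OF feas_compact _ F_cont] zero_feas by blast
  then show ?thesis using F_eq by metis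
qed


lemma log_mono3: assumes "0 \<le> u" "u \<le> v"
  shows "log 2 (1 + \<gamma> * u / real w) \<le> log 2 (1 + \<gamma> * v / real w)"
proof -
  have "0 \<le> \<gamma> / real w" using g0 by simp
  then show ?thesis using log_mono2(1)[OF assms, of "\<gamma> / real w"] by simp
qed

definition tl :: "nat \<Rightarrow> real" where "tl N = suminf (\<lambda>j. g2 (j + N))"

lemma trunc_bound: assumes adm: "admissible B x"
  shows "T x \<le> T (\<lambda>j. if j < N then x j else 0) + tl N"
proof -
  define xt where "xt = (\<lambda>j. if j < N then x j else 0)"
  have ok: "ok x" using adm_ok[OF adm] .
  have okt: "ok xt" unfolding xt_def using feas_ok[OF trunc_feas[OF adm]] .
  have A: "suminf (f2 x) = (\<Sum>j. f2 x (j + N)) + (\<Sum>j<N. f2 x j)"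
    by (rule suminf_split_initial_segment[OF f2_summable[OF ok]])
  have Bq: "(\<Sum>j. f2 x (j + N)) \<le> tl N" unfolding tl_def
    by (rule suminf_le[OF f2_bounds(2)[OF ok] summable_ignore_initial_segment[OF f2_summable[OF ok]]
          summable_ignore_initial_segment[OF g2_summable]])
  have C: "(\<Sum>j<N. f2 x j) = (\<Sum>j<N. f2 xt j)"
    by (rule sum.cong) (auto simp: f2_def xt_def)
  have D: "(\<Sum>j<N. f2 xt j) \<le> suminf (f2 xt)"
    using sum_le_suminf[OF f2_summable[OF okt], of "{..<N}"] f2_bounds(1)[OF okt] by auto
  have pw: "f3 x k \<le> f3 xt k" for k
  proof -
    have "(\<Sum>j\<le>k. xt j) \<le> (\<Sum>j\<le>k. x j)"
      by (rule sum_mono) (use ok_le[OF ok] in \<open>auto simp: xt_def\<close>)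
    then have "log 2 (1 + \<gamma> * (B - (\<Sum>j\<le>k. x j)) / real w) \<le> log 2 (1 + \<gamma> * (B - (\<Sum>j\<le>k. xt j)) / real w)"
      using log_mono3[OF ok_rem[OF ok, of k]] by simp
    then show ?thesis unfolding f3_def by (rule mult_left_mono[OF _ b_nonneg])
  qed
  have E: "suminf (f3 x) \<le> suminf (f3 xt)"
    by (rule suminf_le[OF pw f3_summable[OF ok] f3_summable[OF okt]])
  show ?thesis unfolding xt_def[symmetric] T_eq using A Bq C D E by linarith
qed

lemma tl_lim: "tl \<longlonglongrightarrow> 0"
proof -
  have e: "tl N = suminf g2 - (\<Sum>j<N. g2 j)" for N
    using suminf_split_initial_segment[OF g2_summable, of N] unfolding tl_def by simp
  have "(\<lambda>N. suminf g2 - (\<Sum>j<N. g2 j)) \<longlonglongrightarrow> suminf g2 - suminf g2"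
    by (rule tendsto_diff[OF tendsto_const summable_LIMSEQ[OF g2_summable]])
  then show ?thesis unfolding e[abs_def] by simp
qed

end

theorem lemma2:
  fixes p \<gamma> B :: real and w :: nat
  assumes "0 < p" "p < 1" "0 < \<gamma>" "0 < B" "1 \<le> w"
  shows "(\<forall>N\<ge>1. \<exists>!\<xi>. \<xi> \<in> feasible_N B N \<and>
            (\<forall>\<eta>\<in>feasible_N B N. T_N p \<gamma> B w N \<eta> \<le> T_N p \<gamma> B w N \<xi>))
       \<and> mono_on {1..} (T_N_star p \<gamma> B w)
       \<and> bdd_above (T_inf p \<gamma> B w ` {x. admissible B x})
       \<and> (\<lambda>N. T_N_star p \<gamma> B w N) \<longlonglongrightarrow> T_inf_star p \<gamma> B w"
proof -
  interpret Sett p \<gamma> B w using assms by unfold_locales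
  define S where "S N = T_inf p \<gamma> B w ` feasible_N B N" for N
  have star: "T_N_star p \<gamma> B w N = Sup (S N)" for N
    unfolding T_N_star_def S_def using TN_eq by (metis (no_types, lifting) image_cong)
  have bdd: "bdd_above (T_inf p \<gamma> B w ` {x. admissible B x})"
    by (rule bdd_aboveI2[where M="C0 + suminf g2 + suminf g3"]) (use T_bound adm_ok in auto)
  have sub: "S N \<subseteq> T_inf p \<gamma> B w ` {x. admissible B x}" for N
    unfolding S_def using feas_adm by auto
  have bddS: "bdd_above (S N)" for N using bdd_above_mono[OF bdd sub] .
  have ne: "S N \<noteq> {}" for N unfolding S_def using zero_feas by auto
  have P1: "\<exists>!\<xi>. \<xi> \<in> feasible_N B N \<and>
            (\<forall>\<eta>\<in>feasible_N B N. T_N p \<gamma> B w N \<eta> \<le> T_N p \<gamma> B w N \<xi>)" for N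
  proof -
    obtain \<xi> where \<xi>: "\<xi> \<in> feasible_N B N" "\<forall>\<eta>\<in>feasible_N B N. T \<eta> \<le> T \<xi>"
      using exists_max by blast
    show ?thesis
    proof (rule ex1I[of _ \<xi>])
      show "\<xi> \<in> feasible_N B N \<and> (\<forall>\<eta>\<in>feasible_N B N. T_N p \<gamma> B w N \<eta> \<le> T_N p \<gamma> B w N \<xi>)"
        using \<xi> TN_eq by simp
    next
      fix \<zeta> assume h: "\<zeta> \<in> feasible_N B N \<and> (\<forall>\<eta>\<in>feasible_N B N. T_N p \<gamma> B w N \<eta> \<le> T_N p \<gamma> B w N \<zeta>)"
      then have \<zeta>: "\<zeta> \<in> feasible_N B N" "\<forall>\<eta>\<in>feasible_N B N. T \<eta> \<le> T \<zeta>" using TN_eq by auto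
      show "\<zeta> = \<xi>"
      proof (rule ccontr)
        assume "\<zeta> \<noteq> \<xi>"
        then obtain j0 where j0: "\<zeta> j0 \<noteq> \<xi> j0" by (meson ext)
        have mf: "(\<lambda>j. (\<zeta> j + \<xi> j)/2) \<in> feasible_N B N" by (rule feas_mid[OF \<zeta>(1) \<xi>(1)])
        have "(T \<zeta> + T \<xi>)/2 < T (\<lambda>j. (\<zeta> j + \<xi> j)/2)"
          by (rule T_concave(2)[OF feas_ok[OF \<zeta>(1)] feas_ok[OF \<xi>(1)] j0])
        moreover have "T (\<lambda>j. (\<zeta> j + \<xi> j)/2) \<le> T \<zeta>" "T (\<lambda>j. (\<zeta> j + \<xi> j)/2) \<le> T \<xi>"
          using mf \<zeta>(2) \<xi>(2) by auto
        ultimately show False by argo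
      qed
    qed
  qed
  have P2: "mono_on {1..} (T_N_star p \<gamma> B w)"
  proof (rule mono_onI)
    fix r s :: nat assume "r \<in> {1..}" "s \<in> {1..}" "r \<le> s"
    have "feasible_N B r \<subseteq> feasible_N B s"
    proof
      fix \<xi> assume a: "\<xi> \<in> feasible_N B r"
      have z: "\<forall>j\<ge>r. \<xi> j = 0" using a unfolding feasible_N_def by auto
      have "(\<Sum>j<s. \<xi> j) = (\<Sum>j<r. \<xi> j)"
        by (rule sum.mono_neutral_right) (use z \<open>r \<le> s\<close> in auto)
      then show "\<xi> \<in> feasible_N B s" using a \<open>r \<le> s\<close> unfolding feasible_N_def by auto
    qed
    then have "S r \<subseteq> S s" unfolding S_def by auto
    then show "T_N_star p \<gamma> B w r \<le> T_N_star p \<gamma> B w s"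
      unfolding star by (rule cSup_subset_mono[OF ne bddS])
  qed
  have up: "T_N_star p \<gamma> B w N \<le> T_inf_star p \<gamma> B w" for N
    unfolding star T_inf_star_def by (rule cSup_subset_mono[OF ne bdd sub])
  have low: "T_inf_star p \<gamma> B w - tl N \<le> T_N_star p \<gamma> B w N" for N
  proof -
    have "T_inf_star p \<gamma> B w \<le> T_N_star p \<gamma> B w N + tl N"
      unfolding T_inf_star_def
    proof (rule cSUP_least)
      show "{x. admissible B x} \<noteq> {}" using feas_adm[OF zero_feas] by blast
      fix x assume "x \<in> {x. admissible B x}"
      then have adm: "admissible B x" by simp
      have "T (\<lambda>j. if j < N then x j else 0) \<in> S N" unfolding S_def using trunc_feas[OF adm] by blast
      then have "T (\<lambda>j. if j < N then x j else 0) \<le> T_N_star p \<gamma> B w N"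
        unfolding star using bddS by (rule cSup_upper)
      then show "T x \<le> T_N_star p \<gamma> B w N + tl N" using trunc_bound[OF adm, of N] by linarith
    qed
    then show ?thesis by linarith
  qed
  have P4: "(\<lambda>N. T_N_star p \<gamma> B w N) \<longlonglongrightarrow> T_inf_star p \<gamma> B w"
  proof (rule tendsto_sandwich[where f="\<lambda>N. T_inf_star p \<gamma> B w - tl N" and h="\<lambda>N. T_inf_star p \<gamma> B w"])
    show "\<forall>\<^sub>F N in sequentially. T_inf_star p \<gamma> B w - tl N \<le> T_N_star p \<gamma> B w N" using low by simp
    show "\<forall>\<^sub>F N in sequentially. T_N_star p \<gamma> B w N \<le> T_inf_star p \<gamma> B w" using up by simp
    show "(\<lambda>N. T_inf_star p \<gamma> B w - tl N) \<longlonglongrightarrow> T_inf_star p \<gamma> B w"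
      using tendsto_diff[OF tendsto_const tl_lim, of "T_inf_star p \<gamma> B w"] by simp
  qed simp
  show ?thesis using P1 P2 bdd P4 by blast
qed

end
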